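(* Let $a\in\mathbb{R}$ and let $(c(t))_{t\in\mathbb{R}}$ be a discontinuous bounded complex-valued cosine function (i.e. $c(0)=1$, $c(s+t)+c(s-t)=2c(s)c(t)$ for all $s,t\in\mathbb{R}$, $c$ bounded). Then $$\sup_{t\in\mathbb{R}}|\cos(at)-c(t)|=\limsup_{t\to0}|\cos(at)-c(t)|=2.$$ *)

theory Defs
  imports "HOL-Analysis.Analysis"
begin

definition cosine_function :: "(real \<Rightarrow> complex) \<Rightarrow> bool" where
  "cosine_function c \<longleftrightarrow> c 0 = 1 \<and> (\<forall>s t. c (s + t) + c (s - t) = 2 * c s * c t)"

end

theory Submission
  imports Defs
begin

lemma cos_lip: "\<bar>cos x - cos y\<bar> \<le> \<bar>x - y\<bar>" for x y :: real
proof -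
  have "\<bar>cos x - cos y\<bar> = 2 * \<bar>sin ((x + y) / 2)\<bar> * \<bar>sin ((y - x) / 2)\<bar>"
    by (simp add: cos_diff_cos abs_mult)
  also have "\<dots> \<le> 2 * 1 * \<bar>(y - x) / 2\<bar>"
    by (intro mult_mono abs_sin_x_le_abs_x) auto
  finally show ?thesis by simp
qed

lemma bw_seq:
  fixes x :: "nat \<Rightarrow> real"
  assumes "\<And>j. x j \<in> {a..b}"
  obtains \<sigma> y where "strict_mono \<sigma>" "y \<in> {a..b}" "(x \<circ> \<sigma>) \<longlonglongrightarrow> y"
  using seq_compactE[OF compact_imp_seq_compact[OF compact_Icc], of x a b] assms by metis

locale rcos =
  fixes r :: "real \<Rightarrow> real"
  assumes r0: "r 0 = 1"
    and req: "\<And>s t. r (s + t) + r (s - t) = 2 * r s * r t"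
    and rbd: "\<And>t. \<bar>r t\<bar> \<le> 1"
begin

definition L :: "real set" where
  "L = {y. \<forall>e>0. \<forall>d>0. \<exists>t. \<bar>t\<bar> < d \<and> \<bar>r t - y\<bar> < e}"

definition A :: "real set" where "A = {\<phi>. cos \<phi> \<in> L}"

lemma r_double: "r (2*x) = 2 * (r x)^2 - 1"
proof -
  have "r (x + x) + r (x - x) = 2 * r x * r x" by (rule req)
  moreover have "x + x = 2*x" by simp
  ultimately show ?thesis using r0 by (simp add: power2_eq_square)
qed

lemma r_prod: "r (s+t) * r (s-t) = (r s)^2 + (r t)^2 - 1"
proof -
  have "r ((s+t) + (s-t)) + r ((s+t) - (s-t)) = 2 * r (s+t) * r (s-t)" by (rule req)
  moreover have "s + t + (s - t) = 2 * s" by simp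
  moreover have "s + t - (s - t) = 2 * t" by simp
  ultimately have "2 * r (s+t) * r (s-t) = r (2 * s) + r (2 * t)" by simp
  then show ?thesis using r_double[of s] r_double[of t] by simp
qed

lemma L_seqI:
  assumes "t \<longlonglongrightarrow> 0" "(\<lambda>j. r (t j)) \<longlonglongrightarrow> y"
  shows "y \<in> L"
  unfolding L_def
proof (intro CollectI allI impI)
  fix e d :: real assume "e > 0" "d > 0"
  have "eventually (\<lambda>j. \<bar>t j\<bar> < d) sequentially"
    using assms(1) \<open>d>0\<close> by (auto simp: tendsto_iff dist_real_def)
  moreover have "eventually (\<lambda>j. \<bar>r (t j) - y\<bar> < e) sequentially"
    using assms(2) \<open>e>0\<close> by (auto simp: tendsto_iff dist_real_def)
  ultimately have "eventually (\<lambda>j. \<bar>t j\<bar> < d \<and> \<bar>r (t j) - y\<bar> < e) sequentially"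
    by (rule eventually_conj)
  then show "\<exists>t. \<bar>t\<bar> < d \<and> \<bar>r t - y\<bar> < e"
    unfolding eventually_sequentially by blast
qed

lemma L_seqE:
  assumes "y \<in> L"
  obtains t where "t \<longlonglongrightarrow> 0" "(\<lambda>j. r (t j)) \<longlonglongrightarrow> y"
proof -
  have "\<forall>j. \<exists>t. \<bar>t\<bar> < 1/Suc j \<and> \<bar>r t - y\<bar> < 1/Suc j"
    using assms unfolding L_def by auto
  then obtain t where t: "\<And>j. \<bar>t j\<bar> < 1/Suc j \<and> \<bar>r (t j) - y\<bar> < 1/Suc j"
    by metis
  have "t \<longlonglongrightarrow> 0" by (rule LIMSEQ_norm_0) (use t in auto)
  moreover have "(\<lambda>j. r (t j) - y) \<longlonglongrightarrow> 0" by (rule LIMSEQ_norm_0) (use t in auto)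
  then have "(\<lambda>j. r (t j) - y + y) \<longlonglongrightarrow> 0 + y" by (intro tendsto_add) auto
  ultimately show ?thesis using that by simp
qed

lemma r_cheb:
  assumes "r s = cos \<theta>"
  shows "r (real n * s) = cos (real n * \<theta>)"
proof -
  have "r (real n * s) = cos (real n * \<theta>) \<and> r (real (Suc n) * s) = cos (real (Suc n) * \<theta>)"
  proof (induction n)
    case 0 then show ?case using r0 assms by simp
  next
    case (Suc n)
    have e1: "real (Suc n) * s + s = real (Suc (Suc n)) * s" "real (Suc n) * s - s = real n * s"
      by (simp_all add: algebra_simps)
    have e2: "real (Suc n) * \<theta> + \<theta> = real (Suc (Suc n)) * \<theta>" "real (Suc n) * \<theta> - \<theta> = real n * \<theta>"
      by (simp_all add: algebra_simps)
    have "r (real (Suc (Suc n)) * s) = 2 * r (real (Suc n) * s) * r s - r (real n * s)"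
      using req[of "real (Suc n) * s" s] unfolding e1 by simp
    also have "\<dots> = 2 * cos (real (Suc n) * \<theta>) * cos \<theta> - cos (real n * \<theta>)"
      using Suc assms by simp
    also have "\<dots> = cos (real (Suc (Suc n)) * \<theta>)"
      using cos_add[of "real (Suc n) * \<theta>" \<theta>] cos_diff[of "real (Suc n) * \<theta>" \<theta>] unfolding e2
      by simp
    finally show ?case using Suc by simp
  qed
  thus ?thesis by simp
qed

lemma A_closed:
  assumes "\<And>e. e > 0 \<Longrightarrow> \<exists>z\<in>A. \<bar>z - \<phi>\<bar> < e"
  shows "\<phi> \<in> A"
  unfolding A_def L_def
proof (intro CollectI allI impI)
  fix e d :: real assume "e>0" "d>0"
  obtain z where z: "z \<in> A" "\<bar>z - \<phi>\<bar> < e/2" using assms[of "e/2"] \<open>e>0\<close> by auto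
  from z(1) have "cos z \<in> L" by (simp add: A_def)
  then obtain t where "\<bar>t\<bar> < d" "\<bar>r t - cos z\<bar> < e/2"
  proof -
    have "\<forall>e>0. \<forall>d>0. \<exists>t. \<bar>t\<bar> < d \<and> \<bar>r t - cos z\<bar> < e"
      using \<open>cos z \<in> L\<close> unfolding L_def by blast
    then have "\<exists>t. \<bar>t\<bar> < d \<and> \<bar>r t - cos z\<bar> < e/2" using \<open>e>0\<close> \<open>d>0\<close> half_gt_zero by blast
    then show ?thesis using that by blast
  qed
  moreover have "\<bar>cos z - cos \<phi>\<bar> < e/2" using cos_lip[of z \<phi>] z by linarith
  ultimately have "\<bar>t\<bar> < d \<and> \<bar>r t - cos \<phi>\<bar> < e" by linarith
  then show "\<exists>t. \<bar>t\<bar> < d \<and> \<bar>r t - cos \<phi>\<bar> < e" by blast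
qed

lemma A_add:
  assumes "\<phi> \<in> A" "\<psi> \<in> A"
  shows "\<phi> + \<psi> \<in> A"
proof -
  define a where "a = cos \<phi>"
  define b where "b = cos \<psi>"
  define p where "p = cos (\<phi> + \<psi>)"
  define q where "q = cos (\<phi> - \<psi>)"
  obtain s where s: "s \<longlonglongrightarrow> 0" "(\<lambda>j. r (s j)) \<longlonglongrightarrow> a"
    using assms(1) L_seqE unfolding A_def a_def by blast
  obtain t where t: "t \<longlonglongrightarrow> 0" "(\<lambda>j. r (t j)) \<longlonglongrightarrow> b"
    using assms(2) L_seqE unfolding A_def b_def by blast
  have "\<And>j. r (s j + t j) \<in> {-1..1}" using rbd by (auto simp: abs_le_iff)
  then obtain \<sigma> x where \<sigma>: "strict_mono \<sigma>" "((\<lambda>j. r (s j + t j)) \<circ> \<sigma>) \<longlonglongrightarrow> x"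
    using bw_seq by metis
  define s' where "s' = s \<circ> \<sigma>"
  define t' where "t' = t \<circ> \<sigma>"
  have s': "s' \<longlonglongrightarrow> 0" "(\<lambda>j. r (s' j)) \<longlonglongrightarrow> a"
    using LIMSEQ_subseq_LIMSEQ[OF s(1) \<sigma>(1)] LIMSEQ_subseq_LIMSEQ[OF s(2) \<sigma>(1)]
    by (auto simp: o_def s'_def)
  have t': "t' \<longlonglongrightarrow> 0" "(\<lambda>j. r (t' j)) \<longlonglongrightarrow> b"
    using LIMSEQ_subseq_LIMSEQ[OF t(1) \<sigma>(1)] LIMSEQ_subseq_LIMSEQ[OF t(2) \<sigma>(1)]
    by (auto simp: o_def t'_def)
  have u: "(\<lambda>j. r (s' j + t' j)) \<longlonglongrightarrow> x" using \<sigma>(2) by (simp add: o_def s'_def t'_def)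
  have v: "(\<lambda>j. r (s' j - t' j)) \<longlonglongrightarrow> 2 * a * b - x"
  proof -
    have "(\<lambda>j. 2 * r (s' j) * r (t' j) - r (s' j + t' j)) \<longlonglongrightarrow> 2 * a * b - x"
      by (intro tendsto_intros s'(2) t'(2) u)
    moreover have "2 * r (s' j) * r (t' j) - r (s' j + t' j) = r (s' j - t' j)" for j
      using req[of "s' j" "t' j"] by linarith
    ultimately show ?thesis by simp
  qed
  have "(\<lambda>j. r (s' j + t' j) * r (s' j - t' j)) \<longlonglongrightarrow> x * (2*a*b - x)"
    by (intro tendsto_mult u v)
  moreover have "(\<lambda>j. r (s' j + t' j) * r (s' j - t' j)) \<longlonglongrightarrow> a^2 + b^2 - 1"
    unfolding r_prod by (intro tendsto_intros s'(2) t'(2))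
  ultimately have eq: "x * (2*a*b - x) = a^2 + b^2 - 1" using LIMSEQ_unique by blast
  have pq1: "p + q = 2*a*b" by (simp add: p_def q_def a_def b_def cos_add cos_diff)
  have pq2: "p * q = a^2 + b^2 - 1"
  proof -
    have "p * q = (cos \<phi> * cos \<psi>)^2 - (sin \<phi> * sin \<psi>)^2"
      by (simp add: p_def q_def cos_add cos_diff power2_eq_square algebra_simps)
    also have "\<dots> = (cos \<phi>)^2 * (cos \<psi>)^2 - (1 - (cos \<phi>)^2) * (1 - (cos \<psi>)^2)"
      by (simp add: power_mult_distrib sin_squared_eq)
    also have "\<dots> = a^2 + b^2 - 1" by (simp add: a_def b_def algebra_simps)
    finally show ?thesis .
  qed
  have "(x - p) * (x - q) = x^2 - (p + q) * x + p * q" by algebra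
  also have "\<dots> = 0" using eq unfolding pq1 pq2 by (simp add: algebra_simps power2_eq_square)
  finally have "x = p \<or> x = q" by simp
  then have "p \<in> L"
  proof
    assume "x = p"
    moreover have "(\<lambda>j. s' j + t' j) \<longlonglongrightarrow> 0" using tendsto_add[OF s'(1) t'(1)] by simp
    ultimately show ?thesis using L_seqI u by blast
  next
    assume "x = q"
    then have "2*a*b - x = p" using pq1 by simp
    moreover have "(\<lambda>j. s' j - t' j) \<longlonglongrightarrow> 0" using tendsto_diff[OF s'(1) t'(1)] by simp
    ultimately show ?thesis using L_seqI v by metis
  qed
  thus ?thesis unfolding A_def p_def by simp
qed

lemma A_neg: "\<phi> \<in> A \<Longrightarrow> -\<phi> \<in> A" by (simp add: A_def)

lemma A_zero: "0 \<in> A"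
  unfolding A_def L_def using r0 by (auto intro!: exI[of _ 0])

lemma A_nat: "\<phi> \<in> A \<Longrightarrow> real n * \<phi> \<in> A"
proof (induction n)
  case 0 then show ?case using A_zero by simp
next
  case (Suc n)
  have "real (Suc n) * \<phi> = \<phi> + real n * \<phi>" by (simp add: algebra_simps)
  then show ?case using A_add Suc by simp
qed

lemma A_int: "\<phi> \<in> A \<Longrightarrow> of_int k * \<phi> \<in> A"
proof (cases "k \<ge> 0")
  case True
  assume "\<phi> \<in> A"
  then have "real (nat k) * \<phi> \<in> A" by (rule A_nat)
  then show ?thesis using True by simp
next
  case False
  assume "\<phi> \<in> A"
  then have "- (real (nat (-k)) * \<phi>) \<in> A" by (intro A_neg A_nat)
  then show ?thesis using False by simp
qed

lemma A_div:
  assumes "\<phi> \<in> A" "n \<ge> 1"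
  shows "\<exists>\<psi>\<in>A. cos (real n * \<psi>) = cos \<phi>"
proof -
  obtain t where t: "t \<longlonglongrightarrow> 0" "(\<lambda>j. r (t j)) \<longlonglongrightarrow> cos \<phi>"
    using assms(1) L_seqE unfolding A_def by blast
  define \<theta> where "\<theta> j = arccos (r (t j / real n))" for j
  have rb: "-1 \<le> r x \<and> r x \<le> 1" for x using rbd[of x] by linarith
  have "\<And>j. \<theta> j \<in> {0..pi}" unfolding \<theta>_def using arccos_bounded rb by auto
  then obtain \<sigma> \<psi> where \<sigma>: "strict_mono \<sigma>" "(\<theta> \<circ> \<sigma>) \<longlonglongrightarrow> \<psi>"
    using bw_seq by metis
  have c\<theta>: "r (t j / real n) = cos (\<theta> j)" for j unfolding \<theta>_def using rb by (simp add: cos_arccos)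
  have rn: "r (t j) = cos (real n * \<theta> j)" for j
    using r_cheb[OF c\<theta>[of j], of n] assms(2) by simp
  have "(\<lambda>j. cos (\<theta> (\<sigma> j))) \<longlonglongrightarrow> cos \<psi>"
    using \<sigma>(2) by (intro tendsto_intros) (simp add: o_def)
  then have "(\<lambda>j. r (t (\<sigma> j) / real n)) \<longlonglongrightarrow> cos \<psi>" by (simp add: c\<theta>)
  moreover have "(\<lambda>j. t (\<sigma> j) / real n) \<longlonglongrightarrow> 0"
    using tendsto_divide[OF LIMSEQ_subseq_LIMSEQ[OF t(1) \<sigma>(1)] tendsto_const[of "real n"]] assms(2)
    by (simp add: o_def)
  ultimately have "cos \<psi> \<in> L" using L_seqI by blast
  moreover have "cos (real n * \<psi>) = cos \<phi>"
  proof -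
    have "(\<lambda>j. cos (real n * \<theta> (\<sigma> j))) \<longlonglongrightarrow> cos (real n * \<psi>)"
      using \<sigma>(2) by (intro tendsto_intros) (simp add: o_def)
    moreover have "(\<lambda>j. cos (real n * \<theta> (\<sigma> j))) \<longlonglongrightarrow> cos \<phi>"
      using LIMSEQ_subseq_LIMSEQ[OF t(2) \<sigma>(1)] by (simp add: o_def rn)
    ultimately show ?thesis using LIMSEQ_unique by blast
  qed
  ultimately show ?thesis unfolding A_def by blast
qed


lemma two_pi_A: "2 * pi \<in> A"
  using A_zero by (simp add: A_def)

lemma pi_in_A:
  assumes "\<alpha> \<in> A" "cos \<alpha> \<noteq> 1"
  shows "pi \<in> A"
proof (cases "\<forall>e>0. \<exists>x\<in>A. 0 < x \<and> x < e")
  case True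
  show ?thesis
  proof (rule A_closed)
    fix e :: real assume "e > 0"
    then obtain x where x: "x \<in> A" "0 < x" "x < e" using True by blast
    define k where "k = floor (pi / x)"
    have "of_int k * x \<in> A" using A_int x by blast
    moreover have "\<bar>of_int k * x - pi\<bar> < e"
    proof -
      have "of_int k \<le> pi/x" "pi/x < of_int k + 1" unfolding k_def by linarith+
      then have "of_int k * x \<le> pi" "pi < of_int k * x + x" using x(2)
        by (simp_all add: field_simps)
      thus ?thesis using x by linarith
    qed
    ultimately show "\<exists>z\<in>A. \<bar>z - pi\<bar> < e" by blast
  qed
next
  case False
  then obtain e where e0: "e > 0" "\<forall>x\<in>A. \<not> (0 < x \<and> x < e)" by blast
  then have e: "e > 0" "\<And>x. x \<in> A \<Longrightarrow> 0 < x \<Longrightarrow> e \<le> x" by (meson not_le)+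
  define S where "S = {x\<in>A. 0 < x}"
  have S2: "2 * pi \<in> S" unfolding S_def using two_pi_A by simp
  then have Sne: "S \<noteq> {}" by blast
  have Sbdd: "bdd_below S" unfolding S_def by (rule bdd_belowI[of _ 0]) auto
  define \<gamma> where "\<gamma> = Inf S"
  have \<gamma>e: "e \<le> \<gamma>" unfolding \<gamma>_def by (rule cInf_greatest[OF Sne]) (auto simp: S_def e)
  have \<gamma>le: "\<gamma> \<le> 2 * pi" unfolding \<gamma>_def by (rule cInf_lower[OF S2 Sbdd])
  have \<gamma>A: "\<gamma> \<in> A"
  proof (rule A_closed)
    fix \<epsilon> :: real assume "\<epsilon> > 0"
    then have "Inf S < \<gamma> + \<epsilon>" unfolding \<gamma>_def by simp
    then obtain x where x: "x \<in> S" "x < \<gamma> + \<epsilon>" using cInf_less_iff[OF Sne Sbdd] by blast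
    moreover have "\<gamma> \<le> x" unfolding \<gamma>_def by (rule cInf_lower[OF x(1) Sbdd])
    ultimately show "\<exists>z\<in>A. \<bar>z - \<gamma>\<bar> < \<epsilon>" unfolding S_def
      by (intro bexI[of _ x]) auto
  qed
  have \<gamma>pos: "\<gamma> > 0" using e \<gamma>e by linarith
  have mult: "\<exists>m::int. x = of_int m * \<gamma>" if x: "x \<in> A" for x
  proof -
    define m where "m = floor (x / \<gamma>)"
    have "x + - (of_int m * \<gamma>) \<in> A" by (intro A_add x A_neg A_int \<gamma>A)
    moreover have "of_int m \<le> x / \<gamma>" "x / \<gamma> < of_int m + 1" unfolding m_def by linarith+
    then have "of_int m * \<gamma> \<le> x" "x < of_int m * \<gamma> + \<gamma>" using \<gamma>pos
      by (simp_all add: field_simps)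
    moreover have "\<not> (x + - (of_int m * \<gamma>) \<in> S)"
    proof
      assume "x + - (of_int m * \<gamma>) \<in> S"
      then have "\<gamma> \<le> x + - (of_int m * \<gamma>)" unfolding \<gamma>_def by (rule cInf_lower[OF _ Sbdd])
      then show False using \<open>x < of_int m * \<gamma> + \<gamma>\<close> by linarith
    qed
    ultimately have "x = of_int m * \<gamma>" unfolding S_def by auto
    then show ?thesis by blast
  qed
  obtain N :: int where N: "2 * pi = of_int N * \<gamma>" using mult[OF two_pi_A] by blast
  have "N \<ge> 1"
  proof (rule ccontr)
    assume "\<not> N \<ge> 1" then have "of_int N \<le> (0::real)" by simp
    then have "of_int N * \<gamma> \<le> 0" using \<gamma>pos by (simp add: mult_nonpos_nonneg)
    then show False using N pi_gt_zero by linarith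
  qed
  then have "nat N \<ge> 1" by simp
  from A_div[OF \<gamma>A this] obtain \<psi> where \<psi>: "\<psi> \<in> A" "cos (real (nat N) * \<psi>) = cos \<gamma>"
    by blast
  obtain m :: int where m: "\<psi> = of_int m * \<gamma>" using mult[OF \<psi>(1)] by blast
  have "real (nat N) * \<psi> = (2 * pi) * of_int m"
    using \<open>N \<ge> 1\<close> by (simp add: m N)
  then have "cos \<gamma> = 1" using \<psi>(2) by simp
  then obtain n :: int where n: "\<gamma> = of_int n * 2 * pi" using cos_one_2pi_int by blast
  obtain k :: int where k: "\<alpha> = of_int k * \<gamma>" using mult[OF assms(1)] by blast
  have "\<alpha> = of_int (k * n) * 2 * pi" using k n by simp
  then have "cos \<alpha> = 1" using cos_one_2pi_int by blast
  with assms(2) show ?thesis by blast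
qed

lemma cont_if_cont0:
  assumes "(r \<longlongrightarrow> 1) (at 0)"
  shows "isCont r s"
  unfolding isCont_iff
proof -
  define S where "S h = r (s+h) + r (s-h)" for h
  define D where "D h = r (s+h) - r (s-h)" for h
  have S: "(S \<longlongrightarrow> 2 * r s) (at 0)"
  proof -
    have "((\<lambda>h. 2 * r s * r h) \<longlongrightarrow> 2 * r s * 1) (at 0)" by (intro tendsto_intros assms)
    thus ?thesis using req unfolding S_def by simp
  qed
  have D2: "(D h)^2 = 4 * ((r s)^2 - 1) * ((r h)^2 - 1)" for h
  proof -
    have "(D h)^2 = (S h)^2 - 4 * (r (s+h) * r (s-h))" unfolding D_def S_def by algebra
    also have "\<dots> = (2 * r s * r h)^2 - 4 * ((r s)^2 + (r h)^2 - 1)"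
      unfolding S_def req r_prod ..
    also have "\<dots> = 4 * ((r s)^2 - 1) * ((r h)^2 - 1)" by algebra
    finally show ?thesis .
  qed
  have "((\<lambda>h. sqrt (4 * ((r s)^2 - 1) * ((r h)^2 - 1))) \<longlongrightarrow> sqrt (4 * ((r s)^2 - 1) * (1^2 - 1))) (at 0)"
    by (intro tendsto_intros assms)
  moreover have eqD: "sqrt (4 * ((r s)^2 - 1) * ((r h)^2 - 1)) = \<bar>D h\<bar>" for h
    by (metis D2 real_sqrt_abs)
  ultimately have "((\<lambda>h. \<bar>D h\<bar>) \<longlongrightarrow> sqrt (4 * ((r s)^2 - 1) * (1^2 - 1))) (at 0)"
    by simp
  then have "((\<lambda>h. \<bar>D h\<bar>) \<longlongrightarrow> 0) (at 0)" by simp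
  then have D: "(D \<longlongrightarrow> 0) (at 0)" by (rule tendsto_rabs_zero_cancel)
  have "((\<lambda>h. (S h + D h)/2) \<longlongrightarrow> (2 * r s + 0)/2) (at 0)" by (intro tendsto_intros S D) auto
  moreover have "(S h + D h)/2 = r (s + h)" for h unfolding S_def D_def by simp
  ultimately show "((\<lambda>h. r (s + h)) \<longlongrightarrow> r s) (at 0)" by simp
qed

end

lemma cos_fun_real:
  assumes cf: "cosine_function c" and bd: "bounded (range c)"
  shows "c t = complex_of_real (Re (c t)) \<and> \<bar>Re (c t)\<bar> \<le> 1"
proof -
  from cf have c0: "c 0 = 1" and ceq: "\<And>s t. c (s+t) + c (s-t) = 2 * c s * c t"
    by (auto simp: cosine_function_def)
  have dbl: "c (2 * x) = 2 * (c x)^2 - 1" for x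
  proof -
    have "c (x + x) + c (x - x) = 2 * c x * c x" by (rule ceq)
    moreover have "x + x = 2 * x" by simp
    ultimately have h: "c (2 * x) + 1 = 2 * c x * c x" using c0 by simp
    then show ?thesis by (simp add: power2_eq_square eq_diff_eq mult.assoc)
  qed
  obtain B where B: "\<And>x. cmod (c x) \<le> B" using bd by (auto simp: bounded_iff)
  define w where "w = c t"
  obtain z where z: "z \<noteq> 0" "w = (z + inverse z)/2" "1 \<le> cmod z"
  proof -
    define z0 where "z0 = w + csqrt (w^2 - 1)"
    have "z0 * (2*w - z0) = w^2 - (csqrt (w^2 - 1))^2" unfolding z0_def by algebra
    then have prod: "z0 * (2*w - z0) = 1" by simp
    then have z0nz: "z0 \<noteq> 0" by auto
    have inv: "inverse z0 = 2*w - z0" using prod z0nz by (simp add: field_simps)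
    have w0: "w = (z0 + inverse z0)/2" unfolding inv by simp
    show ?thesis
    proof (cases "1 \<le> cmod z0")
      case True then show ?thesis using that z0nz w0 by blast
    next
      case False
      then have "1 \<le> cmod (inverse z0)" using z0nz
        by (simp add: norm_inverse one_le_inverse_iff) 
      moreover have "w = (inverse z0 + inverse (inverse z0))/2" using w0 by simp
      ultimately show ?thesis using that z0nz by (metis inverse_nonzero_iff_nonzero)
    qed
  qed
  have pow: "c (2^k * t) = (z^(2^k) + inverse z^(2^k))/2" for k
  proof (induction k)
    case 0 then show ?case using z(2) by (simp add: w_def)
  next
    case (Suc k)
    define Z where "Z = z^(2^k)"
    define Y where "Y = inverse z^(2^k)"
    have ZY: "Z * Y = 1" unfolding Z_def Y_def using z(1)
      by (simp add: power_mult_distrib[symmetric])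
    have "c (2^(Suc k) * t) = c (2 * (2^k * t))" by (simp add: algebra_simps)
    also have "\<dots> = 2 * ((Z + Y)/2)^2 - 1" by (simp only: dbl Suc.IH Z_def Y_def)
    also have "\<dots> = (Z^2 + Y^2)/2 + (Z*Y - 1)" by (simp add: power2_eq_square field_simps)
    also have "\<dots> = (z^(2^Suc k) + inverse z^(2^Suc k))/2"
      using ZY by (simp add: Z_def Y_def power_mult[symmetric] mult.commute)
    finally show ?case .
  qed
  have "cmod z = 1"
  proof (rule ccontr)
    assume "cmod z \<noteq> 1" then have gt: "cmod z > 1" using z by auto
    obtain k where k: "2*B + 1 < cmod z ^ k" using real_arch_pow[OF gt] by blast
    have "cmod z ^ k \<le> cmod z ^ (2^k)"
      by (rule power_increasing) (use gt in \<open>auto intro: less_imp_le[OF less_exp]\<close>)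
    have "cmod (inverse z ^ 2^k) = inverse (cmod z) ^ 2^k" by (simp add: norm_power norm_inverse)
    also have "\<dots> \<le> 1" using gt by (intro power_le_one) (auto simp: inverse_le_1_iff)
    finally have iz: "cmod (inverse z ^ 2^k) \<le> 1" .
    have "cmod (z^(2^k)) - cmod (inverse z ^ 2^k) \<le> cmod (z^(2^k) + inverse z ^ 2^k)"
      by (metis norm_diff_ineq norm_minus_cancel diff_minus_eq_add)
    also have "\<dots> = 2 * cmod (c (2^k * t))" unfolding pow[of k] by (simp add: norm_divide)
    also have "\<dots> \<le> 2 * B" using B by simp
    finally have "cmod z ^ (2^k) \<le> 2 * B + 1" using iz by (simp add: norm_power)
    with k \<open>cmod z ^ k \<le> cmod z ^ (2^k)\<close> show False by linarith
  qed
  then have "inverse z = cnj z" using complex_div_cnj[of 1 z] by (simp add: divide_inverse)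
  then have "w = complex_of_real (Re z)" using z(2) complex_add_cnj[of z] by simp
  moreover have "\<bar>Re z\<bar> \<le> 1" using abs_Re_le_cmod[of z] \<open>cmod z = 1\<close> by simp
  ultimately show ?thesis unfolding w_def by simp
qed

theorem corollary3p2:
  fixes a :: real and c :: "real \<Rightarrow> complex"
  assumes "cosine_function c"
    and "bounded (range c)"
    and "\<not> continuous_on UNIV c"
  shows "(SUP t. cmod (complex_of_real (cos (a * t)) - c t)) = 2 \<and>
         Limsup (at (0::real)) (\<lambda>t. ereal (cmod (complex_of_real (cos (a * t)) - c t))) = 2"
proof -
  define r where "r t = Re (c t)" for t
  have creal: "c t = complex_of_real (r t)" and rb: "\<bar>r t\<bar> \<le> 1" for t
    using cos_fun_real[OF assms(1,2), of t] by (auto simp: r_def)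
  from assms(1) have c0: "c 0 = 1" and ceq: "\<And>s t. c (s+t) + c (s-t) = 2 * c s * c t"
    by (auto simp: cosine_function_def)
  interpret rcos r
  proof
    show "r 0 = 1" using c0 by (simp add: r_def)
    show "r (s + t) + r (s - t) = 2 * r s * r t" for s t
    proof -
      have "Re (c (s+t) + c (s-t)) = Re (2 * c s * c t)" using ceq by simp
      then show ?thesis by (simp add: creal)
    qed
    show "\<bar>r t\<bar> \<le> 1" for t by (rule rb)
  qed
  have cfun: "c = (\<lambda>t. complex_of_real (r t))" using creal by auto
  have notlim: "\<not> (r \<longlongrightarrow> 1) (at 0)"
  proof
    assume "(r \<longlongrightarrow> 1) (at 0)"
    then have "isCont r s" for s by (rule cont_if_cont0)
    then have "isCont c s" for s unfolding cfun by (intro continuous_intros)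
    then have "continuous_on UNIV c" by (intro continuous_at_imp_continuous_on) auto
    with assms(3) show False by blast
  qed
  obtain \<alpha> where \<alpha>: "\<alpha> \<in> A" "cos \<alpha> \<noteq> 1"
  proof -
    from notlim obtain e where e: "e > 0"
      "\<And>d. d > 0 \<Longrightarrow> \<exists>x. x \<noteq> 0 \<and> \<bar>x\<bar> < d \<and> \<not> \<bar>r x - 1\<bar> < e"
      unfolding LIM_eq by (auto simp: real_norm_def)
    have "\<forall>j. \<exists>x. \<bar>x\<bar> < 1 / Suc j \<and> e \<le> \<bar>r x - 1\<bar>"
      using e(2)[of "1 / Suc _"] by (auto simp: not_less)
    then obtain t where t: "\<And>j. \<bar>t j\<bar> < 1 / Suc j \<and> e \<le> \<bar>r (t j) - 1\<bar>" by metis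
    have t0: "t \<longlonglongrightarrow> 0" by (rule LIMSEQ_norm_0) (use t in auto)
    have "\<And>j. r (t j) \<in> {-1..1}" using rbd by (auto simp: abs_le_iff)
    then obtain \<sigma> y where \<sigma>: "strict_mono \<sigma>" "((\<lambda>j. r (t j)) \<circ> \<sigma>) \<longlonglongrightarrow> y" "y \<in> {-1..1}"
      using bw_seq by metis
    have "(t \<circ> \<sigma>) \<longlonglongrightarrow> 0" using LIMSEQ_subseq_LIMSEQ[OF t0 \<sigma>(1)] .
    then have "y \<in> L" using L_seqI[of "t \<circ> \<sigma>" y] \<sigma>(2) by (simp add: o_def)
    have "\<And>j. r (t j) \<le> 1 - e" using t rbd by (smt (verit))
    then have "y \<le> 1 - e" using \<sigma>(2) by (intro LIMSEQ_le_const2[of _ y]) (auto simp: o_def)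
    show ?thesis
    proof (rule that)
      show "arccos y \<in> A" using \<open>y \<in> L\<close> \<sigma>(3) by (simp add: A_def cos_arccos)
      show "cos (arccos y) \<noteq> 1" using \<open>y \<le> 1 - e\<close> e(1) \<sigma>(3) by (simp add: cos_arccos)
    qed
  qed
  have "pi \<in> A" by (rule pi_in_A[OF \<alpha>])
  then have "-1 \<in> L" by (simp add: A_def)
  then obtain t where t: "t \<longlonglongrightarrow> 0" "(\<lambda>j. r (t j)) \<longlonglongrightarrow> -1" by (rule L_seqE)
  define f where "f t = cmod (complex_of_real (cos (a * t)) - c t)" for t
  have f_eq: "f t = \<bar>cos (a * t) - r t\<bar>" for t
    unfolding f_def creal by (simp flip: of_real_diff)
  have fle: "f t \<le> 2" for t
    unfolding f_eq using rb[of t] abs_cos_le_one[of "a * t"] by linarith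
  have flim: "(\<lambda>j. f (t j)) \<longlonglongrightarrow> 2"
  proof -
    have "(\<lambda>j. \<bar>cos (a * t j) - r (t j)\<bar>) \<longlonglongrightarrow> \<bar>cos (a * 0) - (-1)\<bar>"
      by (intro tendsto_intros t)
    then show ?thesis by (simp add: f_eq)
  qed
  have bdd: "bdd_above (range f)" by (rule bdd_aboveI[of _ 2]) (auto simp: fle)
  have SUPf: "(SUP t. f t) = 2"
  proof (rule antisym)
    show "(SUP t. f t) \<le> 2" by (rule cSUP_least) (auto simp: fle)
    show "2 \<le> (SUP t. f t)"
      by (rule LIMSEQ_le_const2[OF flim]) (auto intro!: cSUP_upper bdd)
  qed
  have tat: "filterlim t (at 0) sequentially"
  proof (rule filterlim_atI)
    show "filterlim t (nhds 0) sequentially" using t(1) .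
    have "eventually (\<lambda>j. r (t j) < 0) sequentially"
      using order_tendstoD(2)[OF t(2), of 0] by simp
    then show "eventually (\<lambda>j. t j \<noteq> 0) sequentially"
      by eventually_elim (use r0 in auto)
  qed
  have Limf: "Limsup (at 0) (\<lambda>x. ereal (f x)) = 2"
  proof (rule antisym)
    show "Limsup (at 0) (\<lambda>x. ereal (f x)) \<le> 2"
      by (rule Limsup_bounded) (auto simp: fle)
    show "2 \<le> Limsup (at 0) (\<lambda>x. ereal (f x))"
      unfolding Limsup_def
    proof (rule INF_greatest)
      fix P assume "P \<in> {P. eventually P (at (0::real))}"
      then have "eventually (\<lambda>j. P (t j)) sequentially"
        using tat by (simp add: filterlim_iff)
      then have ev: "eventually (\<lambda>j. ereal (f (t j)) \<le> (SUP x\<in>Collect P. ereal (f x))) sequentially"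
        by eventually_elim (auto intro: SUP_upper)
      have "(\<lambda>j. ereal (f (t j))) \<longlonglongrightarrow> ereal 2" using flim by (rule tendsto_ereal)
      then show "2 \<le> (SUP x\<in>Collect P. ereal (f x))"
        using ev by (intro tendsto_upperbound) auto
    qed
  qed
  show ?thesis using SUPf Limf unfolding f_def by simp
qed

end
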